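(* For all parameters $a,b,a',b'$ and indeterminates $x_i,x_j$, \[ R_{12}(x_i,x_j)\,T_1(x_i;a,b)\,T_2(x_j;a',b')=T_2(x_j;a',b')\,T_1(x_i;a,b)\,R_{12}(x_i,x_j), \] where $R(x_i,x_j)$ is the matrix $R(\omega)$ with weights $\omega_1=bx_i+a'x_j$, $\omega_2=ax_i+b'x_j$, $\omega_3=-ax_i+a'x_j$, $\omega_4=bx_i-b'x_j$, $\omega_5=(a'+b')x_j$, $\omega_6=(a+b)x_i$.
   Context: Let $V=\mathbb{C}v_0\oplus\mathbb{C}v_1$ with matrix units $e_{ab}$ ($e_{ab}v_c=\delta_{bc}v_a$). For weights $\omega=(\omega_1,\dots,\omega_6)$ put $R(\omega)=e_{00}\otimes(\omega_1e_{00}+\omega_3e_{11})+e_{01}\otimes\omega_5e_{10}+e_{10}\otimes\omega_6e_{01}+e_{11}\otimes(\omega_4e_{00}+\omega_2e_{11})\in\operatorname{End}(V\otimes V)$. For the quantum space $V^{\otimes n}$ and an auxiliary space $V_s$ ($s=1,2$, copies of $V$), $T_s(x;a,b)=R_{sn}(\omega)\cdots R_{s1}(\omega)\in\operatorname{End}(V_s\otimes V^{\otimes n})$ with $\omega_1=\omega_3=\omega_5=1$, $\omega_2=ax$, $\omega_4=bx$, $\omega_6=(a+b)x$; $R_{sj}$ acts as $R$ on $V_s$ and the $j$-th factor of $V^{\otimes n}$, and $R_{12}$ acts as $R$ on $V_1\otimes V_2$. The identity is in $\operatorname{End}(V_1\otimes V_2\otimes V^{\otimes n})$. *)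

theory Defs
  imports Complex_Main
begin

text \<open>Basis of V: v_0 ~ False, v_1 ~ True.  The global space
  V_1 \<otimes> V_2 \<otimes> V^{\<otimes>n} has basis the bool lists of length n+2:
  position 0 is V_1, position 1 is V_2, position j+1 is the j-th
  quantum factor (1 \<le> j \<le> n).\<close>

type_synonym op = "bool list \<Rightarrow> bool list \<Rightarrow> complex"

definition states :: "nat \<Rightarrow> bool list set" where
  "states n = {l. length l = n + 2}"

definition Rent :: "(nat \<Rightarrow> complex) \<Rightarrow> bool \<Rightarrow> bool \<Rightarrow> bool \<Rightarrow> bool \<Rightarrow> complex" where
  "Rent w r1 r2 c1 c2 =
     (if (r1, r2) = (False, False) \<and> (c1, c2) = (False, False) then w 1
      else if (r1, r2) = (False, True) \<and> (c1, c2) = (False, True) then w 3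
      else if (r1, r2) = (False, True) \<and> (c1, c2) = (True, False) then w 5
      else if (r1, r2) = (True, False) \<and> (c1, c2) = (False, True) then w 6
      else if (r1, r2) = (True, False) \<and> (c1, c2) = (True, False) then w 4
      else if (r1, r2) = (True, True) \<and> (c1, c2) = (True, True) then w 2
      else 0)"

definition op2 :: "(nat \<Rightarrow> complex) \<Rightarrow> nat \<Rightarrow> nat \<Rightarrow> op" where
  "op2 w p q s t =
     (if length s = length t \<and> (\<forall>k<length s. k \<noteq> p \<and> k \<noteq> q \<longrightarrow> s ! k = t ! k)
      then Rent w (s ! p) (s ! q) (t ! p) (t ! q) else 0)"

definition idop :: op where
  "idop s t = (if s = t then 1 else 0)"

definition mult :: "nat \<Rightarrow> op \<Rightarrow> op \<Rightarrow> op" where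
  "mult n A B s t = (\<Sum>u\<in>states n. A s u * B u t)"

fun prodL :: "nat \<Rightarrow> op list \<Rightarrow> op" where
  "prodL n [] = idop"
| "prodL n (A # As) = mult n A (prodL n As)"

definition Tw :: "complex \<Rightarrow> complex \<Rightarrow> complex \<Rightarrow> nat \<Rightarrow> complex" where
  "Tw x a b k = (if k = 1 \<or> k = 3 \<or> k = 5 then 1
                 else if k = 2 then a * x else if k = 4 then b * x
                 else if k = 6 then (a + b) * x else 0)"

text \<open>T_s(x;a,b) = R_{sn} ... R_{s1} with auxiliary slot s (position s-1).\<close>
definition Tmon :: "nat \<Rightarrow> nat \<Rightarrow> complex \<Rightarrow> complex \<Rightarrow> complex \<Rightarrow> op" where
  "Tmon n s x a b = prodL n (map (\<lambda>j. op2 (Tw x a b) (s - 1) (j + 1)) (rev [1..<n+1]))"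

definition R12w :: "complex \<Rightarrow> complex \<Rightarrow> complex \<Rightarrow> complex \<Rightarrow> complex \<Rightarrow> complex \<Rightarrow> nat \<Rightarrow> complex" where
  "R12w xi xj a b a' b' k =
     (if k = 1 then b * xi + a' * xj
      else if k = 2 then a * xi + b' * xj
      else if k = 3 then - a * xi + a' * xj
      else if k = 4 then b * xi - b' * xj
      else if k = 5 then (a' + b') * xj
      else if k = 6 then (a + b) * xi else 0)"

end

theory Submission
  imports Defs
begin


lemma op2_zero:
  assumes "\<not> (length s = length t \<and> (\<forall>k<length s. k \<noteq> p \<and> k \<noteq> q \<longrightarrow> s ! k = t ! k))"
  shows "op2 w p q s t = 0"
  unfolding op2_def by (rule if_not_P[OF assms])

lemma left_action:
  assumes s: "s \<in> states n" and p: "p < n+2" and q: "q < n+2" and pq: "p \<noteq> q"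
  shows "mult n (op2 w p q) B s t =
     (\<Sum>c1\<in>UNIV. \<Sum>c2\<in>UNIV. Rent w (s!p) (s!q) c1 c2 * B (s[p:=c1, q:=c2]) t)"
proof -
  define g where "g = (\<lambda>(c1::bool,c2::bool). s[p:=c1, q:=c2])"
  have ls: "length s = n+2" using s by (simp add: states_def)
  have fin: "finite (states n)" unfolding states_def using finite_lists_length_eq[of "UNIV::bool set"] by simp
  have sub: "g ` UNIV \<subseteq> states n" using ls by (auto simp: g_def states_def)
  have inj: "inj g"
  proof (rule injI)
    fix x y assume "g x = g y"
    then have "g x ! p = g y ! p" "g x ! q = g y ! q" by auto
    moreover have "g (c1,c2) ! p = c1" "g (c1,c2) ! q = c2" for c1 c2
      using ls p q pq by (simp_all add: g_def nth_list_update_neq)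
    ultimately show "x = y" by (cases x; cases y) simp
  qed
  have z: "op2 w p q s u * B u t = 0" if "u \<in> states n - g ` UNIV" for u
  proof -
    have lu: "length u = n+2" using that by (simp add: states_def)
    have "\<not> (length s = length u \<and> (\<forall>k<length s. k \<noteq> p \<and> k \<noteq> q \<longrightarrow> s ! k = u ! k))"
    proof
      assume h: "length s = length u \<and> (\<forall>k<length s. k \<noteq> p \<and> k \<noteq> q \<longrightarrow> s ! k = u ! k)"
      have "u = g (u!p, u!q)" unfolding g_def
        by (rule nth_equalityI) (use h ls lu p q in \<open>auto simp: nth_list_update\<close>)
      then show False using that by auto
    qed
    then show ?thesis by (simp add: op2_zero)
  qed
  have "mult n (op2 w p q) B s t = (\<Sum>u\<in>g ` UNIV. op2 w p q s u * B u t)"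
    unfolding mult_def
    by (rule sum.mono_neutral_right[OF fin sub]) (use z in blast)
  also have "\<dots> = (\<Sum>x\<in>UNIV. op2 w p q s (g x) * B (g x) t)"
    by (simp add: sum.reindex[OF inj])
  also have "\<dots> = (\<Sum>x\<in>UNIV. Rent w (s!p) (s!q) (fst x) (snd x) * B (s[p:=fst x, q:=snd x]) t)"
  proof (rule sum.cong[OF refl])
    fix x :: "bool \<times> bool"
    obtain c1 c2 where x: "x = (c1,c2)" by (cases x)
    have "op2 w p q s (g x) = Rent w (s!p) (s!q) c1 c2"
      using ls p q pq by (auto simp: op2_def g_def x nth_list_update)
    then show "op2 w p q s (g x) * B (g x) t = Rent w (s!p) (s!q) (fst x) (snd x) * B (s[p:=fst x, q:=snd x]) t"
      by (simp add: x g_def)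
  qed
  also have "\<dots> = (\<Sum>c1\<in>UNIV. \<Sum>c2\<in>UNIV. Rent w (s!p) (s!q) c1 c2 * B (s[p:=c1, q:=c2]) t)"
    by (simp only: sum.cartesian_product UNIV_Times_UNIV split_def)
  finally show ?thesis .
qed


lemma finite_states: "finite (states n)"
  unfolding states_def using finite_lists_length_eq[of "UNIV::bool set"] by simp

lemma mult_assoc: "mult n (mult n A B) C = mult n A (mult n B C)"
proof (intro ext)
  fix s t
  show "mult n (mult n A B) C s t = mult n A (mult n B C) s t"
    unfolding mult_def sum_distrib_left sum_distrib_right
    by (subst sum.swap) (simp add: mult.assoc)
qed

definition eqS :: "nat \<Rightarrow> op \<Rightarrow> op \<Rightarrow> bool" where
  "eqS n A B = (\<forall>s\<in>states n. \<forall>t\<in>states n. A s t = B s t)"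

lemma eqS_refl: "eqS n A A" by (simp add: eqS_def)
lemma eqS_sym: "eqS n A B \<Longrightarrow> eqS n B A" by (simp add: eqS_def)
lemma eqS_trans[trans]: "eqS n A B \<Longrightarrow> eqS n B C \<Longrightarrow> eqS n A C" by (simp add: eqS_def)
lemma eq_eqS_trans[trans]: "A = B \<Longrightarrow> eqS n B C \<Longrightarrow> eqS n A C" by simp
lemma eqS_eq_trans[trans]: "eqS n A B \<Longrightarrow> B = C \<Longrightarrow> eqS n A C" by simp

lemma eqS_mult: "eqS n A A' \<Longrightarrow> eqS n B B' \<Longrightarrow> eqS n (mult n A B) (mult n A' B')"
  unfolding eqS_def mult_def by (intro ballI sum.cong) auto

lemma eqS_multL: "eqS n B B' \<Longrightarrow> eqS n (mult n A B) (mult n A B')"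
  by (rule eqS_mult[OF eqS_refl])
lemma eqS_multR: "eqS n A A' \<Longrightarrow> eqS n (mult n A B) (mult n A' B)"
  by (rule eqS_mult[OF _ eqS_refl])

lemma if01L: "(if P then 1 else 0) * (x::complex) = (if P then x else 0)" by simp
lemma if01R: "(x::complex) * (if P then 1 else 0) = (if P then x else 0)" by simp

lemma mult_id_left: "eqS n (mult n idop A) A"
  unfolding eqS_def mult_def idop_def
  by (simp add: if01L sum.delta'[OF finite_states])

lemma mult_id_right: "eqS n (mult n A idop) A"
  unfolding eqS_def mult_def idop_def
  by (simp add: if01R sum.delta[OF finite_states] sum.delta'[OF finite_states])

lemma upd_agree:
  assumes "a < length s" "b < length s"
  shows "(\<forall>k<length s. k \<noteq> p \<and> k \<noteq> q \<longrightarrow> s[a:=c1, b:=c2]!k = t!k) \<longleftrightarrow>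
        (\<forall>k<length s. k \<noteq> p \<and> k \<noteq> q \<and> k \<noteq> a \<and> k \<noteq> b \<longrightarrow> s!k = t!k)
        \<and> (a \<noteq> p \<and> a \<noteq> q \<and> a \<noteq> b \<longrightarrow> c1 = t!a) \<and> (b \<noteq> p \<and> b \<noteq> q \<longrightarrow> c2 = t!b)"
    (is "?L \<longleftrightarrow> ?R")
proof
  assume H: ?L
  have 1: "\<forall>k<length s. k \<noteq> p \<and> k \<noteq> q \<and> k \<noteq> a \<and> k \<noteq> b \<longrightarrow> s!k = t!k"
    using H by (metis nth_list_update_neq)
  have 2: "a \<noteq> p \<and> a \<noteq> q \<and> a \<noteq> b \<longrightarrow> c1 = t!a"
    using H assms by (metis nth_list_update_eq nth_list_update_neq length_list_update)
  have 3: "b \<noteq> p \<and> b \<noteq> q \<longrightarrow> c2 = t!b"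
    using H assms by (metis nth_list_update_eq length_list_update)
  show ?R using 1 2 3 by blast
next
  assume H: ?R
  show ?L
  proof (intro allI impI)
    fix k assume k: "k < length s" "k \<noteq> p \<and> k \<noteq> q"
    show "s[a:=c1, b:=c2]!k = t!k"
    proof (cases "k = b")
      case True then show ?thesis using H k assms by simp
    next
      case False
      then have e: "s[a:=c1, b:=c2]!k = s[a:=c1]!k" by simp
      show ?thesis
      proof (cases "k = a")
        case True then show ?thesis using H k assms False e by simp
      next
        case False2: False
        then show ?thesis using H k e False by simp
      qed
    qed
  qed
qed

lemma op2_upd:
  assumes "a < length s" "b < length s"
  shows "op2 w p q (s[a:=c1, b:=c2]) t =
    (if length s = length t \<and> (\<forall>k<length s. k \<noteq> p \<and> k \<noteq> q \<and> k \<noteq> a \<and> k \<noteq> b \<longrightarrow> s!k = t!k)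
        \<and> (a \<noteq> p \<and> a \<noteq> q \<and> a \<noteq> b \<longrightarrow> c1 = t!a) \<and> (b \<noteq> p \<and> b \<noteq> q \<longrightarrow> c2 = t!b)
     then Rent w (s[a:=c1, b:=c2]!p) (s[a:=c1, b:=c2]!q) (t!p) (t!q) else 0)"
  unfolding op2_def using upd_agree[OF assms, of p q c1 c2 t] by simp

definition agree :: "bool list \<Rightarrow> bool list \<Rightarrow> nat set \<Rightarrow> bool" where
  "agree s t S = (\<forall>k<length s. k \<notin> S \<longrightarrow> s!k = t!k)"

lemma op2_upd':
  assumes "a < length s" "b < length s"
  shows "op2 w p q (s[a:=c1, b:=c2]) t =
    (if length s = length t \<and> agree s t {p,q,a,b}
        \<and> (a \<noteq> p \<and> a \<noteq> q \<and> a \<noteq> b \<longrightarrow> c1 = t!a) \<and> (b \<noteq> p \<and> b \<noteq> q \<longrightarrow> c2 = t!b)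
     then Rent w (s[a:=c1, b:=c2]!p) (s[a:=c1, b:=c2]!q) (t!p) (t!q) else 0)"
  by (simp add: op2_upd[OF assms] agree_def)

lemma sum_pick:
  "(\<Sum>c1\<in>UNIV. \<Sum>c2\<in>UNIV. f c1 c2 * (if A \<and> (c1::bool) = x \<and> (c2::bool) = y then X else 0)) =
   (if A then f x y * (X::complex) else 0)"
  by (cases x; cases y) (simp_all add: UNIV_bool)



lemma agree_upd: "a \<in> S \<Longrightarrow> agree (s[a:=x]) t S = agree s t S"
proof -
  assume a: "a \<in> S"
  have "s[a:=x]!k = s!k" if "k \<notin> S" for k using a that by (metis nth_list_update_neq)
  then show ?thesis by (simp add: agree_def)
qed

lemma states_upd: "s \<in> states n \<Longrightarrow> s[a:=x] \<in> states n"
  by (simp add: states_def)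

lemma rll_L:
  assumes s: "s \<in> states n" and t: "t \<in> states n" and j: "2 \<le> j" "j < n+2"
  shows "mult n (mult n (op2 R 0 1) (op2 A 0 j)) (op2 B 1 j) s t =
    (\<Sum>c1\<in>UNIV. \<Sum>c2\<in>UNIV. Rent R (s!0) (s!1) c1 c2 *
           (\<Sum>d1\<in>UNIV. \<Sum>d2\<in>UNIV. Rent A c1 (s!j) d1 d2 *
              (if agree s t {0,1,j} \<and> d1 = t!0 then Rent B c2 d2 (t!1) (t!j) else 0)))"
proof -
  have ls: "length s = n+2" "length t = n+2" using s t by (auto simp: states_def)
  have lj: "0 < n+2" "(0::nat) \<noteq> j" "1 < n+2" "(1::nat) \<noteq> j" "(0::nat) \<noteq> 1" using j by auto
  have S: "{Suc 0,j,0,j} = {0,Suc 0,j}" by auto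
  have inner: "mult n (op2 A 0 j) (op2 B 1 j) (s[0:=c1, 1:=c2]) t =
     (\<Sum>d1\<in>UNIV. \<Sum>d2\<in>UNIV. Rent A c1 (s!j) d1 d2 *
              (if agree s t {0,1,j} \<and> d1 = t!0 then Rent B c2 d2 (t!1) (t!j) else 0))" for c1 c2
  proof -
    have u: "s[0:=c1, 1:=c2] \<in> states n" using s by (simp add: states_def)
    have lu: "length (s[0:=c1, 1:=c2]) = n+2" using ls by simp
    have ag: "agree (s[0:=c1, Suc 0:=c2]) t {0,Suc 0,j} = agree s t {0,Suc 0,j}"
      by (simp add: agree_upd)
    have e: "op2 B 1 j (s[0:=c1, 1:=c2, 0:=d1, j:=d2]) t =
       (if agree s t {0,1,j} \<and> d1 = t!0 then Rent B c2 d2 (t!1) (t!j) else 0)" for d1 d2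
      by (subst op2_upd') (use j in \<open>simp_all add: lu ls S ag nth_list_update\<close>)
    show ?thesis
      unfolding left_action[OF u lj(1) j(2) lj(2)] e using j ls by (simp add: nth_list_update)
  qed
  show ?thesis
    unfolding mult_assoc left_action[OF s lj(1) lj(3) lj(5)] inner using j by simp
qed

lemma rll_R:
  assumes s: "s \<in> states n" and t: "t \<in> states n" and j: "2 \<le> j" "j < n+2"
  shows "mult n (mult n (op2 B 1 j) (op2 A 0 j)) (op2 R 0 1) s t =
    (\<Sum>c1\<in>UNIV. \<Sum>c2\<in>UNIV. Rent B (s!1) (s!j) c1 c2 *
           (\<Sum>d1\<in>UNIV. \<Sum>d2\<in>UNIV. Rent A (s!0) c2 d1 d2 *
              (if agree s t {0,1,j} \<and> d2 = t!j then Rent R d1 c1 (t!0) (t!1) else 0)))"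
proof -
  have ls: "length s = n+2" "length t = n+2" using s t by (auto simp: states_def)
  have lj: "0 < n+2" "(0::nat) \<noteq> j" "1 < n+2" "(1::nat) \<noteq> j" "(0::nat) \<noteq> 1" using j by auto
  have S: "{0,Suc 0,0,j} = {0,Suc 0,j}" by auto
  have inner: "mult n (op2 A 0 j) (op2 R 0 1) (s[1:=c1, j:=c2]) t =
     (\<Sum>d1\<in>UNIV. \<Sum>d2\<in>UNIV. Rent A (s!0) c2 d1 d2 *
              (if agree s t {0,1,j} \<and> d2 = t!j then Rent R d1 c1 (t!0) (t!1) else 0))" for c1 c2
  proof -
    have u: "s[1:=c1, j:=c2] \<in> states n" using s by (simp add: states_def)
    have lu: "length (s[1:=c1, j:=c2]) = n+2" using ls by simp
    have ag: "agree (s[Suc 0:=c1, j:=c2]) t {0,Suc 0,j} = agree s t {0,Suc 0,j}"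
      by (simp add: agree_upd)
    have e: "op2 R 0 1 (s[1:=c1, j:=c2, 0:=d1, j:=d2]) t =
       (if agree s t {0,1,j} \<and> d2 = t!j then Rent R d1 c1 (t!0) (t!1) else 0)" for d1 d2
      by (subst op2_upd') (use j in \<open>simp_all add: lu ls S ag nth_list_update\<close>)
    show ?thesis
      unfolding left_action[OF u lj(1) j(2) lj(2)] e using j ls by (simp add: nth_list_update)
  qed
  show ?thesis
    unfolding mult_assoc left_action[OF s lj(3) j(2) lj(4)] inner using j by simp
qed



lemma rll_core:
  fixes s0 s1 sj t0 t1 tj :: bool and xi xj a b a' b' :: complex
  defines "R \<equiv> R12w xi xj a b a' b'" and "A \<equiv> Tw xi a b" and "B \<equiv> Tw xj a' b'"
  shows "(\<Sum>c1\<in>UNIV. \<Sum>c2\<in>UNIV. Rent R s0 s1 c1 c2 *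
           (\<Sum>d1\<in>UNIV. \<Sum>d2\<in>UNIV. Rent A c1 sj d1 d2 * (if d1 = t0 then Rent B c2 d2 t1 tj else 0)))
       = (\<Sum>c1\<in>UNIV. \<Sum>c2\<in>UNIV. Rent B s1 sj c1 c2 *
           (\<Sum>d1\<in>UNIV. \<Sum>d2\<in>UNIV. Rent A s0 c2 d1 d2 * (if d2 = tj then Rent R d1 c1 t0 t1 else 0)))"
  unfolding R_def A_def B_def
  by (cases s0; cases s1; cases sj; cases t0; cases t1; cases tj)
     (simp_all add: UNIV_bool Rent_def R12w_def Tw_def algebra_simps)

lemma rll:
  assumes j: "2 \<le> j" "j < n+2"
  shows "eqS n (mult n (mult n (op2 (R12w xi xj a b a' b') 0 1) (op2 (Tw xi a b) 0 j)) (op2 (Tw xj a' b') 1 j))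
               (mult n (mult n (op2 (Tw xj a' b') 1 j) (op2 (Tw xi a b) 0 j)) (op2 (R12w xi xj a b a' b') 0 1))"
  unfolding eqS_def
proof (intro ballI)
  fix s t assume s: "s \<in> states n" and t: "t \<in> states n"
  show "mult n (mult n (op2 (R12w xi xj a b a' b') 0 1) (op2 (Tw xi a b) 0 j)) (op2 (Tw xj a' b') 1 j) s t =
        mult n (mult n (op2 (Tw xj a' b') 1 j) (op2 (Tw xi a b) 0 j)) (op2 (R12w xi xj a b a' b') 0 1) s t"
  proof (cases "agree s t {0,1,j}")
    case True
    then show ?thesis unfolding rll_L[OF s t j] rll_R[OF s t j] using rll_core[of xi xj a b a' b'] by simp
  next
    case False
    then show ?thesis unfolding rll_L[OF s t j] rll_R[OF s t j] by simp
  qed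
qed

lemma swapL: "eqS n (mult n X B) (mult n B X) \<Longrightarrow> eqS n (mult n X (mult n B Y)) (mult n B (mult n X Y))"
proof -
  assume h: "eqS n (mult n X B) (mult n B X)"
  have "mult n X (mult n B Y) = mult n (mult n X B) Y" by (simp add: mult_assoc)
  also have "eqS n \<dots> (mult n (mult n B X) Y)" by (rule eqS_multR[OF h])
  also have "mult n (mult n B X) Y = mult n B (mult n X Y)" by (simp add: mult_assoc)
  finally show ?thesis .
qed

lemma comm_prodL:
  assumes "\<forall>B\<in>set Bs. eqS n (mult n X B) (mult n B X)"
  shows "eqS n (mult n X (prodL n Bs)) (mult n (prodL n Bs) X)"
  using assms
proof (induction Bs)
  case Nil
  show ?case using eqS_trans[OF mult_id_right eqS_sym[OF mult_id_left]] by simp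
next
  case (Cons B Bs)
  have "eqS n (mult n X (mult n B (prodL n Bs))) (mult n B (mult n X (prodL n Bs)))"
    using Cons.prems by (intro swapL) simp
  also have "eqS n \<dots> (mult n B (mult n (prodL n Bs) X))"
    using Cons by (intro eqS_multL) simp
  also have "mult n B (mult n (prodL n Bs) X) = mult n (mult n B (prodL n Bs)) X"
    by (simp add: mult_assoc)
  finally show ?case by simp
qed



lemma op2_comm_half:
  assumes s: "s \<in> states n" and t: "t \<in> states n"
    and lt: "p < n+2" "q < n+2" "p' < n+2" "q' < n+2"
    and d: "p \<noteq> q" "p' \<noteq> q'" "p \<noteq> p'" "p \<noteq> q'" "q \<noteq> p'" "q \<noteq> q'"
  shows "mult n (op2 w p q) (op2 v p' q') s t =
     (if agree s t {p,q,p',q'}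
      then Rent w (s!p) (s!q) (t!p) (t!q) * Rent v (s!p') (s!q') (t!p') (t!q') else 0)"
proof -
  have ls: "length s = n+2" "length t = n+2" using s t by (auto simp: states_def)
  have S: "{p',q',p,q} = {p,q,p',q'}" by auto
  have e: "op2 v p' q' (s[p:=c1, q:=c2]) t =
      (if agree s t {p,q,p',q'} \<and> c1 = t!p \<and> c2 = t!q then Rent v (s!p') (s!q') (t!p') (t!q') else 0)" for c1 c2
    using op2_upd'[of p s q v p' q' c1 c2 t] ls lt d by (simp add: S)
  show ?thesis
    unfolding left_action[OF s lt(1,2) d(1)] e sum_pick ..
qed

lemma op2_comm:
  assumes s: "s \<in> states n" and t: "t \<in> states n"
    and lt: "p < n+2" "q < n+2" "p' < n+2" "q' < n+2"
    and d: "p \<noteq> q" "p' \<noteq> q'" "p \<noteq> p'" "p \<noteq> q'" "q \<noteq> p'" "q \<noteq> q'"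
  shows "mult n (op2 w p q) (op2 v p' q') s t = mult n (op2 v p' q') (op2 w p q) s t"
proof -
  have S: "{p',q',p,q} = {p,q,p',q'}" by auto
  show ?thesis
    unfolding op2_comm_half[OF s t lt d, of w v] op2_comm_half[OF s t lt(3,4,1,2), of v w, OF d(2,1) d(3,5,4,6)[symmetric]] S
    by (simp only: mult.commute)
qed



lemma op2_commS:
  assumes lt: "p < n+2" "q < n+2" "p' < n+2" "q' < n+2"
    and d: "p \<noteq> q" "p' \<noteq> q'" "p \<noteq> p'" "p \<noteq> q'" "q \<noteq> p'" "q \<noteq> q'"
  shows "eqS n (mult n (op2 w p q) (op2 v p' q')) (mult n (op2 v p' q') (op2 w p q))"
  unfolding eqS_def using op2_comm[OF _ _ lt d] by blast

lemma main_ind: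
  fixes L :: "nat list" and xi xj a b a' b' :: complex
  defines "A \<equiv> \<lambda>j. op2 (Tw xi a b) 0 (j+1)" and "B \<equiv> \<lambda>j. op2 (Tw xj a' b') 1 (j+1)"
    and "R \<equiv> op2 (R12w xi xj a b a' b') 0 1"
  assumes "distinct L" "\<forall>j\<in>set L. 1 \<le> j \<and> j \<le> n"
  shows "eqS n (mult n (mult n R (prodL n (map A L))) (prodL n (map B L)))
               (mult n (mult n (prodL n (map B L)) (prodL n (map A L))) R)"
  using assms(4,5)
proof (induction L)
  case Nil
  have 1: "eqS n (mult n (mult n R idop) idop) R"
    using eqS_trans[OF mult_id_right mult_id_right] .
  have 2: "eqS n (mult n (mult n idop idop) R) R"
    using eqS_trans[OF eqS_multR[OF mult_id_left] mult_id_left] .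
  show ?case using eqS_trans[OF 1 eqS_sym[OF 2]] by simp
next
  case (Cons j L)
  let ?P1 = "prodL n (map A L)" and ?P2 = "prodL n (map B L)"
  have j: "1 \<le> j" "j \<le> n" and jL: "j \<notin> set L" and L: "\<forall>k\<in>set L. 1 \<le> k \<and> k \<le> n"
    using Cons.prems by auto
  have IH: "eqS n (mult n (mult n R ?P1) ?P2) (mult n (mult n ?P2 ?P1) R)"
    using Cons by simp
  have cB: "eqS n (mult n (B j) ?P1) (mult n ?P1 (B j))"
    by (rule comm_prodL) (use j jL L in \<open>force simp: A_def B_def intro!: op2_commS\<close>)
  have cA: "eqS n (mult n (A j) ?P2) (mult n ?P2 (A j))"
    by (rule comm_prodL) (use j jL L in \<open>force simp: A_def B_def intro!: op2_commS\<close>)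
  have r: "eqS n (mult n (mult n R (A j)) (B j)) (mult n (mult n (B j) (A j)) R)"
    unfolding A_def B_def R_def by (rule rll) (use j in auto)
  have "mult n (mult n R (mult n (A j) ?P1)) (mult n (B j) ?P2)
      = mult n R (mult n (A j) (mult n ?P1 (mult n (B j) ?P2)))" by (simp add: mult_assoc)
  also have "eqS n \<dots> (mult n R (mult n (A j) (mult n (B j) (mult n ?P1 ?P2))))"
    by (intro eqS_multL swapL eqS_sym[OF cB])
  also have "mult n R (mult n (A j) (mult n (B j) (mult n ?P1 ?P2)))
      = mult n (mult n (mult n R (A j)) (B j)) (mult n ?P1 ?P2)" by (simp add: mult_assoc)
  also have "eqS n \<dots> (mult n (mult n (mult n (B j) (A j)) R) (mult n ?P1 ?P2))"
    by (rule eqS_multR[OF r])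
  also have "mult n (mult n (mult n (B j) (A j)) R) (mult n ?P1 ?P2)
      = mult n (mult n (B j) (A j)) (mult n (mult n R ?P1) ?P2)" by (simp add: mult_assoc)
  also have "eqS n \<dots> (mult n (mult n (B j) (A j)) (mult n (mult n ?P2 ?P1) R))"
    by (rule eqS_multL[OF IH])
  also have "mult n (mult n (B j) (A j)) (mult n (mult n ?P2 ?P1) R)
      = mult n (B j) (mult n (A j) (mult n ?P2 (mult n ?P1 R)))" by (simp add: mult_assoc)
  also have "eqS n \<dots> (mult n (B j) (mult n ?P2 (mult n (A j) (mult n ?P1 R))))"
    by (intro eqS_multL swapL cA)
  also have "mult n (B j) (mult n ?P2 (mult n (A j) (mult n ?P1 R)))
      = mult n (mult n (mult n (B j) ?P2) (mult n (A j) ?P1)) R" by (simp add: mult_assoc)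
  finally show ?case by simp
qed

theorem proposition4p15:
  fixes n :: nat and a b a' b' xi xj :: complex
  assumes "s \<in> states n" and "t \<in> states n"
  shows "mult n (mult n (op2 (R12w xi xj a b a' b') 0 1) (Tmon n 1 xi a b)) (Tmon n 2 xj a' b') s t
       = mult n (mult n (Tmon n 2 xj a' b') (Tmon n 1 xi a b)) (op2 (R12w xi xj a b a' b') 0 1) s t"
proof -
  have e1: "Tmon n 1 xi a b = prodL n (map (\<lambda>j. op2 (Tw xi a b) 0 (j+1)) (rev [1..<n+1]))"
    by (simp add: Tmon_def)
  have e2: "Tmon n 2 xj a' b' = prodL n (map (\<lambda>j. op2 (Tw xj a' b') 1 (j+1)) (rev [1..<n+1]))"
    by (simp add: Tmon_def)
  have "eqS n (mult n (mult n (op2 (R12w xi xj a b a' b') 0 1) (Tmon n 1 xi a b)) (Tmon n 2 xj a' b'))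
              (mult n (mult n (Tmon n 2 xj a' b') (Tmon n 1 xi a b)) (op2 (R12w xi xj a b a' b') 0 1))"
    unfolding e1 e2 by (rule main_ind) auto
  then show ?thesis using assms unfolding eqS_def by blast
qed

end
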